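(* Let $\partial$ be a derivation of $\mathcal{H}_N'$ of degree $\bm 0$, i.e. $\partial(\mathbb{K}h_{\bm r})\subseteq\mathbb{K}h_{\bm r}$ for all $\bm r\in\mathbb{Z}^N$. Then there exist $c_1,\dots,c_N\in\mathbb{K}$ such that, with $h=\sum_{k=1}^N c_kD(e_k,\bm0)\in\mathfrak h$, we have $\partial=\operatorname{ad}(h)$ on $\mathcal{H}_N'$.
   Context: $\mathbb{K}$ is an algebraically closed field of characteristic zero, $N=2m\ge2$ even, $e_1,\dots,e_N$ standard basis, $(\cdot,\cdot)$ the bilinear form on $\mathbb{K}^N$ with $(e_i,e_j)=\delta_{ij}$. Let $A_N=\mathbb{K}[t_1^{\pm1},\dots,t_N^{\pm1}]$, $d_i=t_i\frac{\partial}{\partial t_i}$, $t^{\bm r}=t_1^{r_1}\cdots t_N^{r_N}$, $D(u,\bm r)=\sum_i u_it^{\bm r}d_i$ (so $D(e_k,\bm0)=d_k$). Let $\bm J=\begin{pmatrix} O_m & I_m\\ -I_m & O_m\end{pmatrix}$, $\overline{\bm r}=\bm J\bm r$, $h_{\bm r}=D(\overline{\bm r},\bm r)$, $\mathfrak h=\operatorname{span}_{\mathbb{K}}\{d_1,\dots,d_N\}$. The Hamiltonian Lie algebra $\mathcal{H}_N=\operatorname{span}_{\mathbb{K}}\{h_{\bm r}:\bm r\ne\bm0\}\oplus\mathfrak h$ has commutator bracket with $[h_{\bm r},h_{\bm s}]=(\overline{\bm r},\bm s)h_{\bm r+\bm s}$, $[D(u,\bm0),h_{\bm r}]=(u,\bm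 r)h_{\bm r}$; $\mathcal{H}_N'=\operatorname{span}_{\mathbb{K}}\{h_{\bm r}:\bm r\ne\bm0\}$ is an ideal, and $\operatorname{ad}(h)$ denotes the map $x\mapsto[h,x]$ restricted to $\mathcal{H}_N'$. *)

theory Defs
  imports Main "HOL-Computational_Algebra.Polynomial"
begin

definition alg_closed :: "'a::field itself \<Rightarrow> bool" where
  "alg_closed _ \<longleftrightarrow> (\<forall>p::'a poly. degree p > 0 \<longrightarrow> (\<exists>x. poly p x = 0))"

text \<open>Integer vectors in Z^N are modelled as nat => int functions vanishing at indices >= N.\<close>
definition Zvec :: "nat \<Rightarrow> (nat \<Rightarrow> int) set" where
  "Zvec N = {r. \<forall>i\<ge>N. r i = 0}"

definition form :: "nat \<Rightarrow> (nat \<Rightarrow> int) \<Rightarrow> (nat \<Rightarrow> int) \<Rightarrow> int" where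
  "form N u s = (\<Sum>i<N. u i * s i)"

text \<open>rbar = J r with J = [[0, I_m], [-I_m, 0]], N = 2m.\<close>
definition Jbar :: "nat \<Rightarrow> (nat \<Rightarrow> int) \<Rightarrow> (nat \<Rightarrow> int)" where
  "Jbar m r = (\<lambda>i. if i < m then r (i + m) else if i < 2 * m then - r (i - m) else 0)"

text \<open>Elements of H_N' = span{h_r : r \<noteq> 0}: finitely supported coefficient functions
  x, where x r is the coefficient of h_r.\<close>
definition HNp :: "nat \<Rightarrow> ((nat \<Rightarrow> int) \<Rightarrow> 'a::field) set" where
  "HNp m = {x. finite {r. x r \<noteq> 0} \<and> (\<forall>r. x r \<noteq> 0 \<longrightarrow> r \<in> Zvec (2 * m) \<and> r \<noteq> (\<lambda>_. 0))}"

definition hb :: "(nat \<Rightarrow> int) \<Rightarrow> (nat \<Rightarrow> int) \<Rightarrow> 'a::field" where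
  "hb r = (\<lambda>t. if t = r then 1 else 0)"

text \<open>Bracket [h_r, h_s] = (rbar, s) h_{r+s}, extended bilinearly.\<close>
definition hbracket :: "nat \<Rightarrow> ((nat \<Rightarrow> int) \<Rightarrow> 'a::field) \<Rightarrow> ((nat \<Rightarrow> int) \<Rightarrow> 'a) \<Rightarrow> ((nat \<Rightarrow> int) \<Rightarrow> 'a)" where
  "hbracket m x y = (\<lambda>t. \<Sum>r\<in>{r. x r \<noteq> 0}. \<Sum>s\<in>{s. y s \<noteq> 0}.
      if (\<lambda>i. r i + s i) = t then of_int (form (2 * m) (Jbar m r) s) * x r * y s else 0)"

text \<open>ad(h) on H_N' for h = sum_k c_k D(e_k,0): [D(u,0), h_r] = (u,r) h_r.\<close>
definition ad_h :: "nat \<Rightarrow> (nat \<Rightarrow> 'a::field) \<Rightarrow> ((nat \<Rightarrow> int) \<Rightarrow> 'a) \<Rightarrow> ((nat \<Rightarrow> int) \<Rightarrow> 'a)" where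
  "ad_h m c x = (\<lambda>t. (\<Sum>k<2 * m. c k * of_int (t k)) * x t)"

definition is_derivation :: "nat \<Rightarrow> (((nat \<Rightarrow> int) \<Rightarrow> 'a::field) \<Rightarrow> ((nat \<Rightarrow> int) \<Rightarrow> 'a)) \<Rightarrow> bool" where
  "is_derivation m D \<longleftrightarrow>
     (\<forall>x\<in>HNp m. D x \<in> HNp m) \<and>
     (\<forall>x\<in>HNp m. \<forall>y\<in>HNp m. D (\<lambda>t. x t + y t) = (\<lambda>t. D x t + D y t)) \<and>
     (\<forall>a. \<forall>x\<in>HNp m. D (\<lambda>t. a * x t) = (\<lambda>t. a * D x t)) \<and>
     (\<forall>x\<in>HNp m. \<forall>y\<in>HNp m. D (hbracket m x y) = (\<lambda>t. hbracket m (D x) y t + hbracket m x (D y) t))"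

definition degree_zero :: "nat \<Rightarrow> (((nat \<Rightarrow> int) \<Rightarrow> 'a::field) \<Rightarrow> ((nat \<Rightarrow> int) \<Rightarrow> 'a)) \<Rightarrow> bool" where
  "degree_zero m D \<longleftrightarrow>
     (\<forall>r\<in>Zvec (2 * m). r \<noteq> (\<lambda>_. 0) \<longrightarrow> (\<forall>a. \<exists>b. D (\<lambda>t. a * hb r t) = (\<lambda>t. b * hb r t)))"

end

theory Submission
  imports Defs
begin


definition omega :: "nat \<Rightarrow> (nat \<Rightarrow> int) \<Rightarrow> (nat \<Rightarrow> int) \<Rightarrow> int" where
  "omega m r s = form (2 * m) (Jbar m r) s"

lemma omega_eq: "omega m r s = (\<Sum>i<m. r (i + m) * s i - r i * s (i + m))"
proof -
  have "omega m r s = (\<Sum>i<m + m. Jbar m r i * s i)"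
    by (simp add: omega_def form_def mult_2)
  also have "\<dots> = (\<Sum>i\<in>{0..<m}. Jbar m r i * s i) + (\<Sum>i\<in>{m..<m+m}. Jbar m r i * s i)"
    by (simp add: lessThan_atLeast0 sum.atLeastLessThan_concat)
  also have "(\<Sum>i\<in>{m..<m+m}. Jbar m r i * s i) = (\<Sum>i\<in>{0..<m}. Jbar m r (i + m) * s (i + m))"
    using sum.shift_bounds_nat_ivl[of "\<lambda>i. Jbar m r i * s i" 0 m m] by simp
  finally show ?thesis
    by (simp add: Jbar_def sum_subtractf lessThan_atLeast0 sum.distrib[symmetric] algebra_simps)
qed

lemma omega_add2: "omega m r (\<lambda>i. s i + u i) = omega m r s + omega m r u"
  by (simp add: omega_eq sum.distrib[symmetric] sum_subtractf[symmetric] algebra_simps)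
lemma omega_add1: "omega m (\<lambda>i. r i + s i) u = omega m r u + omega m s u"
  by (simp add: omega_eq sum.distrib[symmetric] sum_subtractf[symmetric] algebra_simps)
lemma omega_smult2: "omega m r (\<lambda>i. n * s i) = n * omega m r s"
  by (simp add: omega_eq sum_distrib_left algebra_simps)
lemma omega_antisym: "omega m r s = - omega m s r"
  by (simp add: omega_eq sum_negf[symmetric] algebra_simps)
lemma omega_self: "omega m r r = 0"
  using omega_antisym[of m r r] by simp
lemma omega_neg2: "omega m r (\<lambda>i. - s i) = - omega m r s"
  by (simp add: omega_eq sum_negf[symmetric] algebra_simps)
lemma omega_zero2: "omega m r (\<lambda>_. 0) = 0"
  by (simp add: omega_eq)

definition unitv :: "nat \<Rightarrow> nat \<Rightarrow> int" where "unitv k = (\<lambda>i. if i = k then 1 else 0)"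

lemma omega_unit: "j < 2 * m \<Longrightarrow> omega m r (unitv j) = Jbar m r j"
  by (simp add: omega_def form_def unitv_def if_distrib cong: if_cong)

lemma nondeg:
  assumes "r \<in> Zvec (2 * m)" "r \<noteq> (\<lambda>_. 0)"
  shows "\<exists>u\<in>Zvec (2 * m). omega m r u \<noteq> 0"
proof -
  obtain k where k: "r k \<noteq> 0" using assms(2) by auto
  have kl: "k < 2 * m"
  proof (rule ccontr)
    assume "\<not> k < 2 * m"
    then have "r k = 0" using assms(1) by (simp add: Zvec_def)
    with k show False by simp
  qed
  show ?thesis
  proof (cases "k < m")
    case True
    have "omega m r (unitv (k + m)) = - r k"
      using True by (simp add: omega_unit Jbar_def)
    moreover have "unitv (k + m) \<in> Zvec (2 * m)" using True by (simp add: Zvec_def unitv_def)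
    ultimately show ?thesis using k by force
  next
    case False
    have km: "k - m < m" "k - m + m = k" "k - m < 2 * m" using False kl by auto
    have "omega m r (unitv (k - m)) = r k"
      using False km by (simp add: omega_unit Jbar_def)
    moreover have "unitv (k - m) \<in> Zvec (2 * m)" using False kl by (simp add: Zvec_def unitv_def)
    ultimately show ?thesis using k by force
  qed
qed


lemma Zvec_add: "r \<in> Zvec N \<Longrightarrow> s \<in> Zvec N \<Longrightarrow> (\<lambda>i. r i + s i) \<in> Zvec N"
  by (simp add: Zvec_def)
lemma Zvec_smult: "r \<in> Zvec N \<Longrightarrow> (\<lambda>i. n * r i) \<in> Zvec N"
  by (simp add: Zvec_def)
lemma Zvec_neg: "r \<in> Zvec N \<Longrightarrow> (\<lambda>i. - r i) \<in> Zvec N"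
  by (simp add: Zvec_def)
lemma Zvec_zero: "(\<lambda>_. 0) \<in> Zvec N"
  by (simp add: Zvec_def)

lemma finite_bad:
  assumes "(a::int) \<noteq> 0"
  shows "finite {l::int. a + l * b = 0}"
proof (cases "b = 0")
  case True then show ?thesis using assms by simp
next
  case False
  have "{l::int. a + l * b = 0} \<subseteq> {(- a) div b}"
  proof
    fix l assume "l \<in> {l::int. a + l * b = 0}"
    then have "l * b = - a" by simp
    moreover have "l = (l * b) div b" using False by simp
    ultimately have "l = (- a) div b" by simp
    then show "l \<in> {(- a) div b}" by simp
  qed
  then show ?thesis using finite_subset by blast
qed

lemma avoid:
  assumes "\<forall>v\<in>set vs. v \<in> Zvec (2 * m) \<and> v \<noteq> (\<lambda>_. 0)"
  shows "\<exists>t\<in>Zvec (2 * m). \<forall>v\<in>set vs. omega m v t \<noteq> 0"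
  using assms
proof (induction vs)
  case Nil
  then show ?case using Zvec_zero by auto
next
  case (Cons v vs)
  then obtain t where t: "t \<in> Zvec (2 * m)" "\<forall>w\<in>set vs. omega m w t \<noteq> 0" by auto
  show ?case
  proof (cases "omega m v t = 0")
    case False then show ?thesis using t by auto
  next
    case True
    obtain u where u: "u \<in> Zvec (2 * m)" "omega m v u \<noteq> 0"
      using nondeg[of v m] Cons.prems by auto
    let ?B = "insert 0 (\<Union>w\<in>set vs. {l::int. omega m w t + l * omega m w u = 0})"
    have "finite ?B" using finite_bad t(2) by (simp add: finite_UN)
    then obtain l where l: "l \<notin> ?B" using ex_new_if_finite[OF infinite_UNIV_int] by blast
    let ?t = "\<lambda>i. t i + l * u i"
    have "?t \<in> Zvec (2 * m)" using t u by (simp add: Zvec_def)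
    moreover have "omega m v ?t = l * omega m v u"
      using True by (simp add: omega_add2 omega_smult2)
    moreover have "\<forall>w\<in>set vs. omega m w ?t \<noteq> 0"
      using l by (simp add: omega_add2 omega_smult2)
    ultimately show ?thesis using l u by (intro bexI[of _ ?t]) (simp_all add: Zvec_def)
  qed
qed

lemma sum_nonzero:
  assumes "omega m v w \<noteq> 0" shows "(\<lambda>i. v i + w i) \<noteq> (\<lambda>_. 0)"
proof
  assume "(\<lambda>i. v i + w i) = (\<lambda>_. 0)"
  then have "\<forall>i. v i + w i = 0" by (simp add: fun_eq_iff)
  then have "w = (\<lambda>i. - v i)" by (simp add: fun_eq_iff add_eq_0_iff2 add.commute)
  then show False using assms by (simp add: omega_neg2 omega_self)
qed

lemma nonzero_of_omega:
  assumes "omega m v w \<noteq> 0" shows "w \<noteq> (\<lambda>_. 0)"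
  using assms omega_zero2 by auto



locale addphi =
  fixes m :: nat and \<phi> :: "(nat \<Rightarrow> int) \<Rightarrow> 'a::comm_ring_1"
  assumes add: "\<And>r s. r \<in> Zvec (2 * m) \<Longrightarrow> s \<in> Zvec (2 * m) \<Longrightarrow> r \<noteq> (\<lambda>_. 0) \<Longrightarrow>
     s \<noteq> (\<lambda>_. 0) \<Longrightarrow> omega m r s \<noteq> 0 \<Longrightarrow> \<phi> (\<lambda>i. r i + s i) = \<phi> r + \<phi> s"
begin

lemma full_add:
  assumes r: "r \<in> Zvec (2 * m)" "r \<noteq> (\<lambda>_. 0)" and s: "s \<in> Zvec (2 * m)" "s \<noteq> (\<lambda>_. 0)"
    and rs: "(\<lambda>i. r i + s i) \<noteq> (\<lambda>_. 0)"
  shows "\<phi> (\<lambda>i. r i + s i) = \<phi> r + \<phi> s"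
proof (cases "omega m r s = 0")
  case False then show ?thesis using add r s by blast
next
  case True
  let ?rs = "\<lambda>i. r i + s i"
  have rsZ: "?rs \<in> Zvec (2 * m)" by (rule Zvec_add[OF r(1) s(1)])
  obtain t where t: "t \<in> Zvec (2 * m)" "\<forall>v\<in>set [r, s, ?rs]. omega m v t \<noteq> 0"
    using avoid[of "[r, s, ?rs]" m] r s rs rsZ by auto
  then have t1: "omega m r t \<noteq> 0" and t2: "omega m s t \<noteq> 0" and t3: "omega m ?rs t \<noteq> 0" by auto
  have tnz: "t \<noteq> (\<lambda>_. 0)" using nonzero_of_omega t1 by blast
  let ?st = "\<lambda>i. s i + t i"
  have stZ: "?st \<in> Zvec (2 * m)" by (rule Zvec_add[OF s(1) t(1)])
  have stnz: "?st \<noteq> (\<lambda>_. 0)" using sum_nonzero t2 by blast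
  have e1: "\<phi> (\<lambda>i. ?rs i + t i) = \<phi> ?rs + \<phi> t" using add[OF rsZ t(1) rs tnz t3] .
  have e2: "\<phi> ?st = \<phi> s + \<phi> t" using add[OF s(1) t(1) s(2) tnz t2] .
  have "omega m r ?st = omega m r t" using True by (simp add: omega_add2)
  then have e3: "\<phi> (\<lambda>i. r i + ?st i) = \<phi> r + \<phi> ?st" using add[OF r(1) stZ r(2) stnz] t1 by simp
  have "(\<lambda>i. ?rs i + t i) = (\<lambda>i. r i + ?st i)" by (simp add: add.assoc)
  then show ?thesis using e1 e2 e3 by (simp add: algebra_simps)
qed

lemma neg:
  assumes r: "r \<in> Zvec (2 * m)" "r \<noteq> (\<lambda>_. 0)"
  shows "\<phi> (\<lambda>i. - r i) = - \<phi> r"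
proof -
  obtain k where k: "r k \<noteq> 0" using r(2) by auto
  let ?rr = "\<lambda>i. r i + r i"
  have rrZ: "?rr \<in> Zvec (2 * m)" by (rule Zvec_add[OF r(1) r(1)])
  have rrnz: "?rr \<noteq> (\<lambda>_. 0)"
  proof
    assume "?rr = (\<lambda>_. 0)"
    then have "r k + r k = 0" using fun_cong[of ?rr "\<lambda>_. 0" k] by simp
    with k show False by simp
  qed
  have nrZ: "(\<lambda>i. - r i) \<in> Zvec (2 * m)" by (rule Zvec_neg[OF r(1)])
  have nrnz: "(\<lambda>i. - r i) \<noteq> (\<lambda>_. 0)"
  proof
    assume "(\<lambda>i. - r i) = (\<lambda>_. 0)"
    then have "- r k = 0" using fun_cong[of "\<lambda>i. - r i" "\<lambda>_. 0" k] by simp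
    with k show False by simp
  qed
  have e1: "\<phi> ?rr = \<phi> r + \<phi> r" using full_add[OF r r rrnz] .
  have eq: "(\<lambda>i. ?rr i + - r i) = r" by auto
  have e2: "\<phi> (\<lambda>i. ?rr i + - r i) = \<phi> ?rr + \<phi> (\<lambda>i. - r i)"
    using full_add[OF rrZ rrnz nrZ nrnz] eq r(2) by simp
  have h: "\<phi> r + \<phi> (\<lambda>i. - r i) = 0" using e1 e2 eq by (simp add: algebra_simps)
  show ?thesis using neg_eq_iff_add_eq_0[of "\<phi> r" "\<phi> (\<lambda>i. - r i)"] h by auto
qed

definition \<phi>0 where "\<phi>0 r = (if r = (\<lambda>_. 0) then 0 else \<phi> r)"

lemma add0:
  assumes r: "r \<in> Zvec (2 * m)" and s: "s \<in> Zvec (2 * m)"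
  shows "\<phi>0 (\<lambda>i. r i + s i) = \<phi>0 r + \<phi>0 s"
proof (cases "r = (\<lambda>_. 0)")
  case True then show ?thesis by (simp add: \<phi>0_def)
next
  case rnz: False
  show ?thesis
  proof (cases "s = (\<lambda>_. 0)")
    case True then show ?thesis by (simp add: \<phi>0_def)
  next
    case snz: False
    show ?thesis
    proof (cases "(\<lambda>i. r i + s i) = (\<lambda>_. 0)")
      case False then show ?thesis using full_add[OF r rnz s snz False] rnz snz by (simp add: \<phi>0_def)
    next
      case True
      then have "s = (\<lambda>i. - r i)" by (simp add: fun_eq_iff add_eq_0_iff2 add.commute)
      then show ?thesis using True neg[OF r rnz] rnz snz by (simp add: \<phi>0_def)
    qed
  qed
qed

lemma smult0_nat:
  assumes v: "v \<in> Zvec (2 * m)"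
  shows "\<phi>0 (\<lambda>i. int n * v i) = of_nat n * \<phi>0 v"
proof (induction n)
  case 0 then show ?case by (simp add: \<phi>0_def)
next
  case (Suc n)
  have "(\<lambda>i. int (Suc n) * v i) = (\<lambda>i. int n * v i + v i)" by (simp add: algebra_simps)
  then have "\<phi>0 (\<lambda>i. int (Suc n) * v i) = \<phi>0 (\<lambda>i. int n * v i) + \<phi>0 v"
    using add0[OF Zvec_smult[OF v] v] by simp
  then show ?case using Suc by (simp add: algebra_simps)
qed

lemma neg0:
  assumes v: "v \<in> Zvec (2 * m)"
  shows "\<phi>0 (\<lambda>i. - v i) = - \<phi>0 v"
proof (cases "v = (\<lambda>_. 0)")
  case True then show ?thesis by (simp add: \<phi>0_def)
next
  case False
  have nnz: "(\<lambda>i. - v i) \<noteq> (\<lambda>_. 0)"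
  proof
    assume "(\<lambda>i. - v i) = (\<lambda>_. 0)"
    then have "v = (\<lambda>_. 0)" by (simp add: fun_eq_iff)
    with False show False by simp
  qed
  then show ?thesis using neg[OF v False] False by (simp add: \<phi>0_def)
qed

lemma smult0:
  assumes v: "v \<in> Zvec (2 * m)"
  shows "\<phi>0 (\<lambda>i. n * v i) = of_int n * \<phi>0 v"
proof (cases "n \<ge> 0")
  case True
  then obtain k where "n = int k" using nonneg_int_cases by blast
  then show ?thesis using smult0_nat[OF v, of k] by simp
next
  case False
  then have "- n \<ge> 0" by simp
  then obtain k where "- n = int k" using nonneg_int_cases by blast
  then have k: "n = - int k" by simp
  have "(\<lambda>i. n * v i) = (\<lambda>i. - (int k * v i))" using k by simp
  then show ?thesis using neg0[OF Zvec_smult[OF v, of "int k"]] smult0_nat[OF v, of k] k by simp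
qed

definition trunc :: "nat \<Rightarrow> (nat \<Rightarrow> int) \<Rightarrow> nat \<Rightarrow> int" where
  "trunc j r = (\<lambda>i. if i < j then r i else 0)"

lemma trunc_formula:
  assumes r: "r \<in> Zvec (2 * m)"
  shows "j \<le> 2 * m \<Longrightarrow> \<phi>0 (trunc j r) = (\<Sum>k<j. \<phi> (unitv k) * of_int (r k))"
proof (induction j)
  case 0
  have "trunc 0 r = (\<lambda>_. 0)" by (simp add: trunc_def)
  then show ?case by (simp add: \<phi>0_def)
next
  case (Suc j)
  have tZ: "trunc j r \<in> Zvec (2 * m)" using Suc.prems by (simp add: Zvec_def trunc_def)
  have uZ: "unitv j \<in> Zvec (2 * m)" using Suc.prems by (simp add: Zvec_def unitv_def)
  have unz: "unitv j \<noteq> (\<lambda>_. 0)"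
  proof
    assume "unitv j = (\<lambda>_. 0)"
    then have "unitv j j = 0" by simp
    then show False by (simp add: unitv_def)
  qed
  have "trunc (Suc j) r = (\<lambda>i. trunc j r i + r j * unitv j i)"
    by (auto simp: trunc_def unitv_def fun_eq_iff less_Suc_eq)
  then have "\<phi>0 (trunc (Suc j) r) = \<phi>0 (trunc j r) + of_int (r j) * \<phi>0 (unitv j)"
    using add0[OF tZ Zvec_smult[OF uZ]] smult0[OF uZ] by simp
  then show ?case using Suc unz by (simp add: \<phi>0_def algebra_simps)
qed

lemma formula:
  assumes r: "r \<in> Zvec (2 * m)" "r \<noteq> (\<lambda>_. 0)"
  shows "\<phi> r = (\<Sum>k<2 * m. \<phi> (unitv k) * of_int (r k))"
proof -
  have "trunc (2 * m) r = r" using r(1) by (auto simp: trunc_def Zvec_def fun_eq_iff)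
  then show ?thesis using trunc_formula[OF r(1), of "2 * m"] r(2) by (simp add: \<phi>0_def)
qed

end



lemma supp_hb: "{t. a * hb r t \<noteq> (0::'a::field)} = (if a = 0 then {} else {r})"
  by (auto simp: hb_def)

lemma hb_eta: "hb r = (\<lambda>t. 1 * hb r t)" by simp

lemma hb_in: "r \<in> Zvec (2 * m) \<Longrightarrow> r \<noteq> (\<lambda>_. 0) \<Longrightarrow> (hb r :: _ \<Rightarrow> 'a::field) \<in> HNp m"
  by (auto simp: HNp_def hb_def)

lemma HNp_zero: "(\<lambda>_. 0) \<in> HNp m"
  by (simp add: HNp_def)

lemma HNp_smult: "x \<in> HNp m \<Longrightarrow> (\<lambda>t. a * x t) \<in> HNp m"
  unfolding HNp_def by (auto intro: finite_subset[of _ "{r. x r \<noteq> 0}"])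

lemma HNp_add: "x \<in> HNp m \<Longrightarrow> y \<in> HNp m \<Longrightarrow> (\<lambda>t. x t + y t) \<in> HNp m"
proof -
  assume x: "x \<in> HNp m" and y: "y \<in> HNp m"
  have "{r. x r + y r \<noteq> 0} \<subseteq> {r. x r \<noteq> 0} \<union> {r. y r \<noteq> 0}" by auto
  moreover have "finite ({r. x r \<noteq> 0} \<union> {r. y r \<noteq> 0})" using x y by (simp add: HNp_def)
  ultimately have "finite {r. x r + y r \<noteq> 0}" using finite_subset by blast
  moreover have "\<forall>r. x r + y r \<noteq> 0 \<longrightarrow> r \<in> Zvec (2 * m) \<and> r \<noteq> (\<lambda>_. 0)"
  proof (intro allI impI)
    fix r assume "x r + y r \<noteq> 0"
    then have "x r \<noteq> 0 \<or> y r \<noteq> 0" by auto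
    then show "r \<in> Zvec (2 * m) \<and> r \<noteq> (\<lambda>_. 0)" using x y unfolding HNp_def by blast
  qed
  ultimately show ?thesis by (simp add: HNp_def)
qed

lemma bracket_hb:
  "hbracket m (\<lambda>t. a * hb r t) (\<lambda>t. b * hb s t) =
   (\<lambda>t. (of_int (omega m r s) * a * b) * (hb (\<lambda>i. r i + s i) t :: 'a::field))"
proof (cases "a = 0 \<or> b = 0")
  case True then show ?thesis by (auto simp: hbracket_def supp_hb)
next
  case False
  then have sa: "{t. a * hb r t \<noteq> (0::'a)} = {r}" and sb: "{t. b * hb s t \<noteq> (0::'a)} = {s}"
    by (auto simp: hb_def)
  show ?thesis unfolding hbracket_def sa sb
    by (rule ext) (simp add: hb_def omega_def eq_commute)
qed



locale der =
  fixes m :: nat and D :: "((nat \<Rightarrow> int) \<Rightarrow> 'a::field_char_0) \<Rightarrow> ((nat \<Rightarrow> int) \<Rightarrow> 'a)"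
  assumes isd: "is_derivation m D" and dz: "degree_zero m D"
begin

definition ph :: "(nat \<Rightarrow> int) \<Rightarrow> 'a" where "ph r = D (hb r) r"

lemma D_in: "x \<in> HNp m \<Longrightarrow> D x \<in> HNp m" using isd by (simp add: is_derivation_def)
lemma D_add: "x \<in> HNp m \<Longrightarrow> y \<in> HNp m \<Longrightarrow> D (\<lambda>t. x t + y t) = (\<lambda>t. D x t + D y t)"
  using isd by (simp add: is_derivation_def)
lemma D_smult: "x \<in> HNp m \<Longrightarrow> D (\<lambda>t. a * x t) = (\<lambda>t. a * D x t)"
  using isd by (simp add: is_derivation_def)
lemma D_leib: "x \<in> HNp m \<Longrightarrow> y \<in> HNp m \<Longrightarrow>
   D (hbracket m x y) = (\<lambda>t. hbracket m (D x) y t + hbracket m x (D y) t)"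
  using isd by (simp add: is_derivation_def)

lemma D_hb:
  assumes "r \<in> Zvec (2 * m)" "r \<noteq> (\<lambda>_. 0)"
  shows "D (hb r) = (\<lambda>t. ph r * hb r t)"
proof -
  obtain b where b: "D (\<lambda>t. 1 * hb r t) = (\<lambda>t. b * hb r t)"
    using dz assms unfolding degree_zero_def by blast
  then have b': "D (hb r) = (\<lambda>t. b * hb r t)" by simp
  then have "ph r = b" by (simp add: ph_def hb_def)
  then show ?thesis using b' by simp
qed

lemma D_zero: "D (\<lambda>_. 0) = (\<lambda>_. 0)"
  using D_smult[OF HNp_zero, of 0] by simp

lemma D_sum:
  assumes "finite S" "\<forall>r\<in>S. r \<in> Zvec (2 * m) \<and> r \<noteq> (\<lambda>_. 0)"
  shows "(\<lambda>t. \<Sum>r\<in>S. a r * hb r t) \<in> HNp m \<and>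
         D (\<lambda>t. \<Sum>r\<in>S. a r * hb r t) = (\<lambda>t. \<Sum>r\<in>S. a r * (ph r * hb r t))"
  using assms
proof (induction S rule: finite_induct)
  case empty
  then show ?case using HNp_zero D_zero by simp
next
  case (insert r S)
  then have IH: "(\<lambda>t. \<Sum>r\<in>S. a r * hb r t) \<in> HNp m"
     "D (\<lambda>t. \<Sum>r\<in>S. a r * hb r t) = (\<lambda>t. \<Sum>r\<in>S. a r * (ph r * hb r t))" by auto
  have rr: "r \<in> Zvec (2 * m)" "r \<noteq> (\<lambda>_. 0)" using insert.prems by auto
  have h1: "(\<lambda>t. a r * hb r t) \<in> HNp m" using HNp_smult[OF hb_in[OF rr]] .
  have eq: "(\<lambda>t. \<Sum>r\<in>insert r S. a r * hb r t) = (\<lambda>t. a r * hb r t + (\<Sum>r\<in>S. a r * hb r t))"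
    using insert.hyps by simp
  have "D (\<lambda>t. a r * hb r t) = (\<lambda>t. a r * (ph r * hb r t))"
    using D_smult[OF hb_in[OF rr]] D_hb[OF rr] by simp
  then show ?case using eq HNp_add[OF h1 IH(1)] D_add[OF h1 IH(1)] IH(2) insert.hyps by simp
qed

lemma D_formula:
  assumes x: "x \<in> HNp m"
  shows "D x = (\<lambda>t. ph t * x t)"
proof -
  let ?S = "{r. x r \<noteq> 0}"
  have fin: "finite ?S" and sub: "\<forall>r\<in>?S. r \<in> Zvec (2 * m) \<and> r \<noteq> (\<lambda>_. 0)"
    using x by (auto simp: HNp_def)
  have hsum: "\<And>f t. (\<Sum>r\<in>?S. f r * (hb r t :: 'a)) = (if t \<in> ?S then f t else 0)"
  proof -
    fix f t
    have "(\<Sum>r\<in>?S. f r * hb r t) = (\<Sum>r\<in>?S. if r = t then f r else 0)"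
      by (rule sum.cong) (auto simp: hb_def)
    also have "\<dots> = (if t \<in> ?S then f t else 0)" using fin by (rule sum.delta)
    finally show "(\<Sum>r\<in>?S. f r * hb r t) = (if t \<in> ?S then f t else 0)" .
  qed
  have xe: "x = (\<lambda>t. \<Sum>r\<in>?S. x r * hb r t)"
    by (rule ext) (simp only: hsum, auto)
  have "D x = (\<lambda>t. \<Sum>r\<in>?S. x r * (ph r * hb r t))"
    using D_sum[OF fin sub, of x] xe by simp
  also have "\<dots> = (\<lambda>t. ph t * x t)"
  proof (rule ext)
    fix t
    have "(\<Sum>r\<in>?S. x r * (ph r * hb r t)) = (\<Sum>r\<in>?S. (x r * ph r) * hb r t)"
      by (simp add: mult.assoc)
    also have "\<dots> = ph t * x t" by (simp only: hsum) auto
    finally show "(\<Sum>r\<in>?S. x r * (ph r * hb r t)) = ph t * x t" .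
  qed
  finally show ?thesis .
qed

lemma ph_add:
  assumes r: "r \<in> Zvec (2 * m)" "r \<noteq> (\<lambda>_. 0)" and s: "s \<in> Zvec (2 * m)" "s \<noteq> (\<lambda>_. 0)"
    and w: "omega m r s \<noteq> 0"
  shows "ph (\<lambda>i. r i + s i) = ph r + ph s"
proof -
  let ?rs = "\<lambda>i. r i + s i"
  let ?w = "of_int (omega m r s) :: 'a"
  have rs: "?rs \<in> Zvec (2 * m)" "?rs \<noteq> (\<lambda>_. 0)"
    using Zvec_add[OF r(1) s(1)] sum_nonzero[OF w] by auto
  have br: "hbracket m (hb r) (hb s) = (\<lambda>t. ?w * hb ?rs t)"
    using bracket_hb[of m 1 r 1 s] by (simp add: hb_eta[symmetric])
  have e1: "D (hbracket m (hb r) (hb s)) = (\<lambda>t. ?w * (ph ?rs * hb ?rs t))"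
    unfolding br using D_smult[OF hb_in[OF rs]] D_hb[OF rs] by simp
  have e2: "D (hbracket m (hb r) (hb s)) =
      (\<lambda>t. ?w * ph r * hb ?rs t + ?w * ph s * hb ?rs t)"
    using D_leib[OF hb_in[OF r] hb_in[OF s]] D_hb[OF r] D_hb[OF s]
      bracket_hb[of m "ph r" r 1 s] bracket_hb[of m 1 r "ph s" s]
    by (simp add: hb_eta[symmetric])
  have "?w * (ph ?rs * hb ?rs ?rs) = ?w * ph r * hb ?rs ?rs + ?w * ph s * hb ?rs ?rs"
    using fun_cong[OF trans[OF e1[symmetric] e2], of ?rs] by simp
  then have "?w * ph ?rs = ?w * (ph r + ph s)" by (simp add: hb_def algebra_simps)
  moreover have "?w \<noteq> 0" using w by simp
  ultimately show ?thesis by simp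
qed

end


theorem lemma4p4:
  fixes m :: nat
    and D :: "((nat \<Rightarrow> int) \<Rightarrow> 'a::field_char_0) \<Rightarrow> ((nat \<Rightarrow> int) \<Rightarrow> 'a)"
  assumes "alg_closed TYPE('a)"
    and "m \<ge> 1"
    and "is_derivation m D"
    and "degree_zero m D"
  shows "\<exists>c :: nat \<Rightarrow> 'a. \<forall>x\<in>HNp m. D x = ad_h m c x"
proof -
  interpret der m D using assms(3,4) by unfold_locales
  interpret addphi m ph using ph_add by unfold_locales blast
  show ?thesis
  proof (intro exI ballI)
    fix x :: "(nat \<Rightarrow> int) \<Rightarrow> 'a" assume x: "x \<in> HNp m"
    show "D x = ad_h m (\<lambda>k. ph (unitv k)) x"
    proof (rule ext)
      fix t
      show "D x t = ad_h m (\<lambda>k. ph (unitv k)) x t"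
      proof (cases "x t = 0")
        case True then show ?thesis by (simp add: D_formula[OF x] ad_h_def)
      next
        case False
        then have "t \<in> Zvec (2 * m)" "t \<noteq> (\<lambda>_. 0)" using x by (auto simp: HNp_def)
        then show ?thesis using formula by (simp add: D_formula[OF x] ad_h_def)
      qed
    qed
  qed
qed

end
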